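(* Let $\sigma = 2$. For every Parikh vector $P \in \mathbb{N}_0^{2}$ and every word $w \in \Sigma^{*|_P}$, there exists a Hamiltonian path in the configuration graph $G(P)$ starting at $w$.
   Context: Alphabet $\Sigma = \{1,2\}$. For $P \in \mathbb{N}_0^2$, $n := P[1]+P[2]$ and $\Sigma^{*|_P}$ is the set of words of length $n$ with exactly $P[1]$ occurrences of $1$ and $P[2]$ occurrences of $2$. For a word $w$ and $i\neq j$ with $w[i]\neq w[j]$, the 2-swap $w\circ(i,j)$ exchanges the symbols at positions $i$ and $j$. The configuration graph $G(P)$ has vertex set $\Sigma^{*|_P}$ and an edge $\{w,u\}$ whenever $u = w\circ(i,j)$ for some 2-swap. A Hamiltonian path starting at $w$ is a path beginning at $w$ that visits every vertex exactly once. *)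

theory Defs
  imports Main
begin

text \<open>Alphabet Sigma = {1,2} (letters as naturals). A Parikh vector P in N0^2 is
  given by its two entries p1 = P[1] and p2 = P[2].\<close>

definition words_P :: "nat \<Rightarrow> nat \<Rightarrow> nat list set" where
  "words_P p1 p2 = {w. length w = p1 + p2 \<and> set w \<subseteq> {1, 2}
      \<and> count_list w 1 = p1 \<and> count_list w 2 = p2}"

definition swap2 :: "nat list \<Rightarrow> nat \<Rightarrow> nat \<Rightarrow> nat list" where
  "swap2 w i j = w[i := w ! j, j := w ! i]"

definition conf_edge :: "nat list \<Rightarrow> nat list \<Rightarrow> bool" where
  "conf_edge w u \<longleftrightarrow> (\<exists>i j. i < length w \<and> j < length w \<and> i \<noteq> j
      \<and> w ! i \<noteq> w ! j \<and> u = swap2 w i j)"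

definition ham_path_from :: "nat \<Rightarrow> nat \<Rightarrow> nat list \<Rightarrow> nat list list \<Rightarrow> bool" where
  "ham_path_from p1 p2 w ps \<longleftrightarrow> ps \<noteq> [] \<and> hd ps = w \<and> distinct ps
      \<and> set ps = words_P p1 p2
      \<and> (\<forall>k. Suc k < length ps \<longrightarrow> conf_edge (ps ! k) (ps ! Suc k))"

end

theory Submission
  imports Defs
begin

lemma succ_nth: "successively P xs \<longleftrightarrow> (\<forall>k. Suc k < length xs \<longrightarrow> P (xs ! k) (xs ! Suc k))"
proof (induction P xs rule: successively.induct)
  case (3 P x y xs)
  show ?case
  proof
    assume "successively P (x # y # xs)"
    then show "\<forall>k. Suc k < length (x # y # xs) \<longrightarrow> P ((x # y # xs) ! k) ((x # y # xs) ! Suc k)"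
      using 3 by (auto simp: nth_Cons split: nat.splits)
  next
    assume H: "\<forall>k. Suc k < length (x # y # xs) \<longrightarrow> P ((x # y # xs) ! k) ((x # y # xs) ! Suc k)"
    have "P x y" using H[rule_format, of 0] by simp
    moreover have "\<forall>k. Suc k < length (y # xs) \<longrightarrow> P ((y # xs) ! k) ((y # xs) ! Suc k)"
      using H by (metis Suc_less_eq length_Cons nth_Cons_Suc)
    ultimately show "successively P (x # y # xs)" using 3 by simp
  qed
qed auto

lemma ham_iff: "ham_path_from p1 p2 w ps \<longleftrightarrow> ps \<noteq> [] \<and> hd ps = w \<and> distinct ps
      \<and> set ps = words_P p1 p2 \<and> successively conf_edge ps"
  unfolding ham_path_from_def succ_nth by simp

lemma edge_cons: "conf_edge x y \<Longrightarrow> conf_edge (a#x) (a#y)"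
  unfolding conf_edge_def swap2_def
  apply clarify
  subgoal for i j by (rule exI[of _ "Suc i"], rule exI[of _ "Suc j"]) simp
  done

lemma cross_edge:
  assumes "b \<noteq> a"
  shows "conf_edge (a # ys @ b # zs) (b # ys @ a # zs)"
  unfolding conf_edge_def swap2_def
  apply (rule exI[of _ 0], rule exI[of _ "Suc (length ys)"])
  using assms by (simp add: list_update_append nth_append)

lemma glue:
  fixes A B :: "nat list set"
  assumes cd: "c \<noteq> d"
    and p1: "ps1 \<noteq> []" "hd ps1 = v" "distinct ps1" "set ps1 = A" "successively conf_edge ps1"
    and cr: "B \<noteq> {} \<Longrightarrow> \<exists>y\<in>B. conf_edge (c # last ps1) (d # y)"
    and IH: "\<forall>u\<in>B. \<exists>ps. ps\<noteq>[] \<and> hd ps = u \<and> distinct ps \<and> set ps = B \<and> successively conf_edge ps"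
  shows "\<exists>ps. ps\<noteq>[] \<and> hd ps = c # v \<and> distinct ps \<and> set ps = Cons c ` A \<union> Cons d ` B
     \<and> successively conf_edge ps"
proof (cases "B = {}")
  case True
  show ?thesis
    by (rule exI[of _ "map (Cons c) ps1"])
       (use p1 True in \<open>auto simp: distinct_map successively_map hd_map intro: successively_mono edge_cons\<close>)
next
  case False
  then obtain y where y: "y \<in> B" "conf_edge (c # last ps1) (d # y)" using cr by blast
  then obtain ps2 where p2: "ps2\<noteq>[]" "hd ps2 = y" "distinct ps2" "set ps2 = B" "successively conf_edge ps2"
    using IH by blast
  have s1: "successively conf_edge (map (Cons c) ps1)"
    using p1 by (auto simp: successively_map intro: successively_mono edge_cons)
  have s2: "successively conf_edge (map (Cons d) ps2)"
    using p2 by (auto simp: successively_map intro: successively_mono edge_cons)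
  show ?thesis
    apply (rule exI[of _ "map (Cons c) ps1 @ map (Cons d) ps2"])
    using p1 p2 s1 s2 y cd
    by (auto simp: distinct_map successively_append_iff hd_map last_map)
qed

lemma words_0: "words_P 0 0 = {[]}"
  unfolding words_P_def by auto

lemma words_decomp:
  assumes "p1 + p2 > 0"
  shows "words_P p1 p2 = (if p1 > 0 then Cons 1 ` words_P (p1-1) p2 else {})
          \<union> (if p2 > 0 then Cons 2 ` words_P p1 (p2-1) else {})"
proof (intro equalityI subsetI)
  fix w assume w: "w \<in> words_P p1 p2"
  then obtain x v where wv: "w = x # v" using assms unfolding words_P_def
    by (cases w) auto
  have "x = 1 \<or> x = 2" using w wv unfolding words_P_def by auto
  then show "w \<in> (if p1 > 0 then Cons 1 ` words_P (p1-1) p2 else {})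
          \<union> (if p2 > 0 then Cons 2 ` words_P p1 (p2-1) else {})"
    using w wv unfolding words_P_def by auto
next
  fix w assume "w \<in> (if p1 > 0 then Cons 1 ` words_P (p1-1) p2 else {})
          \<union> (if p2 > 0 then Cons 2 ` words_P p1 (p2-1) else {})"
  then show "w \<in> words_P p1 p2" unfolding words_P_def
    by (auto split: if_splits)
qed

lemma main:
  "w \<in> words_P p1 p2 \<Longrightarrow> \<exists>ps. ps\<noteq>[] \<and> hd ps = w \<and> distinct ps \<and> set ps = words_P p1 p2
     \<and> successively conf_edge ps"
proof (induction "p1 + p2" arbitrary: p1 p2 w)
  case 0
  then show ?case using words_0
    by (intro exI[of _ "[[]]"]) auto
next
  case (Suc m)
  have dec: "words_P p1 p2 = (if p1 > 0 then Cons 1 ` words_P (p1-1) p2 else {})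
          \<union> (if p2 > 0 then Cons 2 ` words_P p1 (p2-1) else {})"
    by (rule words_decomp) (use Suc.hyps(2) in linarith)
  show ?case
  proof (cases "hd w = 1")
    case True
    have p1: "p1 > 0" and v: "tl w \<in> words_P (p1-1) p2" and w: "w = 1 # tl w"
      using Suc.prems True dec by (auto split: if_splits)
    have m1: "m = (p1 - 1) + p2" using p1 Suc.hyps(2) by simp
    obtain ps1 where q: "ps1\<noteq>[]" "hd ps1 = tl w" "distinct ps1" "set ps1 = words_P (p1-1) p2"
        "successively conf_edge ps1" using Suc.hyps(1)[OF m1 v] by blast
    define B where "B = (if p2 > 0 then words_P p1 (p2-1) else {})"
    have IHB: "\<forall>u\<in>B. \<exists>ps. ps\<noteq>[] \<and> hd ps = u \<and> distinct ps \<and> set ps = B \<and> successively conf_edge ps"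
    proof
      fix u assume u: "u \<in> B"
      then have p2: "p2 > 0" unfolding B_def by (auto split: if_splits)
      have m2: "m = p1 + (p2 - 1)" using p2 Suc.hyps(2) by simp
      show "\<exists>ps. ps\<noteq>[] \<and> hd ps = u \<and> distinct ps \<and> set ps = B \<and> successively conf_edge ps"
        using Suc.hyps(1)[OF m2] u p2 unfolding B_def by simp
    qed
    have cr: "\<exists>y\<in>B. conf_edge (1 # last ps1) (2 # y)" if "B \<noteq> {}"
    proof -
      have p2: "p2 > 0" using that unfolding B_def by (auto split: if_splits)
      have lw: "last ps1 \<in> words_P (p1-1) p2" using q(1,4) last_in_set by blast
      then have "count_list (last ps1) 2 \<noteq> 0" using p2 unfolding words_P_def by simp
      then have "2 \<in> set (last ps1)" by (simp add: count_list_0_iff)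
      then obtain ys zs where yz: "last ps1 = ys @ 2 # zs" by (meson split_list)
      have "ys @ 1 # zs \<in> B" using lw p1 p2 unfolding B_def words_P_def yz by auto
      then show ?thesis using cross_edge[of 2 1 ys zs] yz by auto
    qed
    have "\<exists>ps. ps\<noteq>[] \<and> hd ps = 1 # tl w \<and> distinct ps \<and> set ps = Cons 1 ` words_P (p1-1) p2 \<union> Cons 2 ` B
       \<and> successively conf_edge ps"
      by (rule glue[OF _ q cr IHB]) simp_all
    moreover have "Cons 1 ` words_P (p1-1) p2 \<union> Cons 2 ` B = words_P p1 p2"
      using dec p1 unfolding B_def by auto
    ultimately obtain ps where "ps\<noteq>[]" "hd ps = w" "distinct ps" "set ps = words_P p1 p2"
       "successively conf_edge ps" using w by auto
    then show ?thesis by blast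
  next
    case False
    have p2: "p2 > 0" and v: "tl w \<in> words_P p1 (p2-1)" and w: "w = 2 # tl w"
      using Suc.prems False dec by (auto split: if_splits)
    have m1: "m = p1 + (p2 - 1)" using p2 Suc.hyps(2) by simp
    obtain ps1 where q: "ps1\<noteq>[]" "hd ps1 = tl w" "distinct ps1" "set ps1 = words_P p1 (p2-1)"
        "successively conf_edge ps1" using Suc.hyps(1)[OF m1 v] by blast
    define B where "B = (if p1 > 0 then words_P (p1-1) p2 else {})"
    have IHB: "\<forall>u\<in>B. \<exists>ps. ps\<noteq>[] \<and> hd ps = u \<and> distinct ps \<and> set ps = B \<and> successively conf_edge ps"
    proof
      fix u assume u: "u \<in> B"
      then have p1: "p1 > 0" unfolding B_def by (auto split: if_splits)
      have m2: "m = (p1 - 1) + p2" using p1 Suc.hyps(2) by simp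
      show "\<exists>ps. ps\<noteq>[] \<and> hd ps = u \<and> distinct ps \<and> set ps = B \<and> successively conf_edge ps"
        using Suc.hyps(1)[OF m2] u p1 unfolding B_def by simp
    qed
    have cr: "\<exists>y\<in>B. conf_edge (2 # last ps1) (1 # y)" if "B \<noteq> {}"
    proof -
      have p1: "p1 > 0" using that unfolding B_def by (auto split: if_splits)
      have lw: "last ps1 \<in> words_P p1 (p2-1)" using q(1,4) last_in_set by blast
      then have "count_list (last ps1) 1 \<noteq> 0" using p1 unfolding words_P_def by simp
      then have "1 \<in> set (last ps1)" by (simp add: count_list_0_iff)
      then obtain ys zs where yz: "last ps1 = ys @ 1 # zs" by (meson split_list)
      have "ys @ 2 # zs \<in> B" using lw p1 p2 unfolding B_def words_P_def yz by auto
      then show ?thesis using cross_edge[of 1 2 ys zs] yz by auto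
    qed
    have "\<exists>ps. ps\<noteq>[] \<and> hd ps = 2 # tl w \<and> distinct ps \<and> set ps = Cons 2 ` words_P p1 (p2-1) \<union> Cons 1 ` B
       \<and> successively conf_edge ps"
      by (rule glue[OF _ q cr IHB]) simp_all
    moreover have "Cons 2 ` words_P p1 (p2-1) \<union> Cons 1 ` B = words_P p1 p2"
      using dec p2 unfolding B_def by auto
    ultimately obtain ps where "ps\<noteq>[]" "hd ps = w" "distinct ps" "set ps = words_P p1 p2"
       "successively conf_edge ps" using w by auto
    then show ?thesis by blast
  qed
qed

theorem theorem2:
  fixes p1 p2 :: nat and w :: "nat list"
  assumes "w \<in> words_P p1 p2"
  shows "\<exists>ps. ham_path_from p1 p2 w ps"
  using main[OF assms] unfolding ham_iff by blast

end
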